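(* Let $\Gamma$ be a locally finite weighted graph and let $X$ be a finite subset of its vertex set. Then the following are equivalent: (1) $\Delta(\mathbb{R}^\Gamma_{\Gamma\setminus X})=\mathbb{R}^\Gamma$; (2) there is no non-zero finitely supported function on $\Gamma$ that is harmonic on $\Gamma\setminus X$.
   Context: Weighted graph: undirected, no loops or multiple edges, weights $\omega_{xy}=\omega_{yx}>0$, $\deg x=\sum_{y\sim x}\omega_{xy}$. Laplacian: $\Delta f(x)=f(x)-\frac{1}{\deg x}\sum_{y\sim x}\omega_{xy}f(y)$ for $f\in\mathbb{R}^\Gamma$. For a set $Y$ of vertices, $\mathbb{R}^\Gamma_Y$ denotes the space of functions $\Gamma\to\mathbb{R}$ supported on $Y$. A function is harmonic on $A$ if $\Delta f(x)=0$ for all $x\in A$. *)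

theory Defs
  imports Main "HOL.Real"
begin

definition weighted_graph :: "('a \<Rightarrow> 'a \<Rightarrow> real) \<Rightarrow> bool" where
  "weighted_graph w \<longleftrightarrow> (\<forall>x y. w x y = w y x) \<and> (\<forall>x y. 0 \<le> w x y) \<and> (\<forall>x. w x x = 0)"

definition neighbours :: "('a \<Rightarrow> 'a \<Rightarrow> real) \<Rightarrow> 'a \<Rightarrow> 'a set" where
  "neighbours w x = {y. 0 < w x y}"

definition locally_finite :: "('a \<Rightarrow> 'a \<Rightarrow> real) \<Rightarrow> bool" where
  "locally_finite w \<longleftrightarrow> (\<forall>x. finite (neighbours w x))"

definition deg :: "('a \<Rightarrow> 'a \<Rightarrow> real) \<Rightarrow> 'a \<Rightarrow> real" where
  "deg w x = (\<Sum>y\<in>neighbours w x. w x y)"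

definition laplacian :: "('a \<Rightarrow> 'a \<Rightarrow> real) \<Rightarrow> ('a \<Rightarrow> real) \<Rightarrow> 'a \<Rightarrow> real" where
  "laplacian w f x = f x - (\<Sum>y\<in>neighbours w x. w x y * f y) / deg w x"

definition supported_on :: "'a set \<Rightarrow> ('a \<Rightarrow> real) set" where
  "supported_on Y = {f. \<forall>x. x \<notin> Y \<longrightarrow> f x = 0}"

definition harmonic_on :: "('a \<Rightarrow> 'a \<Rightarrow> real) \<Rightarrow> ('a \<Rightarrow> real) \<Rightarrow> 'a set \<Rightarrow> bool" where
  "harmonic_on w f A \<longleftrightarrow> (\<forall>x\<in>A. laplacian w f x = 0)"

definition finitely_supported :: "('a \<Rightarrow> real) \<Rightarrow> bool" where
  "finitely_supported f \<longleftrightarrow> finite {x. f x \<noteq> 0}"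

end

theory Submission
  imports Defs Complex_Main "HOL-Library.Function_Algebras"
begin

definition sc :: "real \<Rightarrow> ('a \<Rightarrow> real) \<Rightarrow> ('a \<Rightarrow> real)" where
  "sc c f = (\<lambda>x. c * f x)"

lemma vsp: "vector_space_pair (sc :: real \<Rightarrow> ('a \<Rightarrow> real) \<Rightarrow> ('a \<Rightarrow> real)) ((*) :: real \<Rightarrow> real \<Rightarrow> real)"
  by unfold_locales (auto simp: sc_def fun_eq_iff algebra_simps)

lemma vs1: "vector_space (sc :: real \<Rightarrow> ('a \<Rightarrow> real) \<Rightarrow> ('a \<Rightarrow> real))"
  using vsp unfolding vector_space_pair_def by blast

lemma extend:
  assumes "\<And>S u. finite S \<Longrightarrow> S \<subseteq> B \<Longrightarrow> (\<Sum>v\<in>S. sc (u v) v) = 0 \<Longrightarrow> (\<forall>v\<in>S. u v = 0)"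
  shows "\<exists>g. Vector_Spaces.linear sc ((*)::real\<Rightarrow>real\<Rightarrow>real) g \<and> (\<forall>x\<in>(B::('a\<Rightarrow>real) set). g x = f x)"
proof -
  interpret vector_space_pair "sc :: real \<Rightarrow> ('a \<Rightarrow> real) \<Rightarrow> ('a \<Rightarrow> real)" "(*) :: real \<Rightarrow> real \<Rightarrow> real"
    by (rule vsp)
  have "vs1.independent B"
    unfolding vs1.independent_explicit_finite_subsets using assms by blast
  then show ?thesis by (rule linear_independent_extend)
qed

lemma lin_sum:
  assumes "Vector_Spaces.linear sc ((*)::real\<Rightarrow>real\<Rightarrow>real) g"
  shows "g (\<Sum>i\<in>E. sc (c i) (v i :: 'a \<Rightarrow> real)) = (\<Sum>i\<in>E. c i * g (v i))"
proof -
  interpret Vector_Spaces.linear sc "(*) :: real \<Rightarrow> real \<Rightarrow> real" g by (rule assms)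
  show ?thesis by (simp add: sum scale)
qed

lemma sum_fun_app: "(\<Sum>i\<in>E. F i) (y::'a) = (\<Sum>i\<in>E. F i y)"
  for F :: "'b \<Rightarrow> 'a \<Rightarrow> real"
  by (induct E rule: infinite_finite_induct) auto

definition mu :: "('a \<Rightarrow> 'a \<Rightarrow> real) \<Rightarrow> 'a \<Rightarrow> real" where
  "mu w x = (if deg w x > 0 then deg w x else 1)"

lemma mu_pos: "mu w x > 0" by (simp add: mu_def)

lemma deg0:
  assumes "locally_finite w" "\<not> deg w x > 0"
  shows "neighbours w x = {}"
proof (rule ccontr)
  assume "neighbours w x \<noteq> {}"
  moreover have "finite (neighbours w x)" using assms(1) by (simp add: locally_finite_def)
  ultimately have "deg w x > 0" unfolding deg_def
    by (intro sum_pos) (auto simp: neighbours_def)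
  with assms show False by simp
qed

lemma lemA:
  assumes "locally_finite w"
  shows "mu w y * laplacian w f y = mu w y * f y - (\<Sum>z\<in>neighbours w y. w y z * f z)"
proof (cases "deg w y > 0")
  case True
  then have "deg w y \<noteq> 0" by simp
  then show ?thesis using True by (simp add: mu_def laplacian_def right_diff_distrib)
next
  case False thus ?thesis using deg0[OF assms False] by (simp add: mu_def laplacian_def)
qed

lemma lemB:
  assumes "weighted_graph w" "locally_finite w" "finite F" "\<And>z. z \<in> neighbours w y \<Longrightarrow> u z \<noteq> 0 \<Longrightarrow> z \<in> F"
  shows "(\<Sum>z\<in>neighbours w y. w y z * u z) = (\<Sum>z\<in>F. w y z * u z)"
proof -
  have fin: "finite (neighbours w y)" using assms(2) by (simp add: locally_finite_def)
  have "(\<Sum>z\<in>neighbours w y. w y z * u z) = (\<Sum>z\<in>neighbours w y \<inter> F. w y z * u z)"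
    by (rule sum.mono_neutral_right) (use fin assms(4) in auto)
  also have "\<dots> = (\<Sum>z\<in>F. w y z * u z)"
  proof (rule sum.mono_neutral_left)
    show "\<forall>i\<in>F - neighbours w y \<inter> F. w y i * u i = 0"
    proof
      fix i assume i: "i \<in> F - neighbours w y \<inter> F"
      have "0 \<le> w y i" using assms(1) unfolding weighted_graph_def by blast
      moreover have "\<not> 0 < w y i" using i by (auto simp: neighbours_def)
      ultimately show "w y i * u i = 0" by simp
    qed
  qed (use assms(3) in auto)
  finally show ?thesis .
qed

lemma t1: "(\<Sum>y\<in>F. (m y * f y - (\<Sum>z\<in>F. w y z * f z)) * g y) = (\<Sum>y\<in>F. m y * f y * g y) - (\<Sum>y\<in>F. \<Sum>z\<in>F. w y z * f z * (g y::real))"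
  by (simp add: left_diff_distrib sum_subtractf sum_distrib_right)
lemma t2: "(\<Sum>y\<in>F. m y * f y * g y) - (\<Sum>y\<in>F. \<Sum>z\<in>F. w y z * g z * f y)
     = (\<Sum>y\<in>F. f y * (m y * g y - (\<Sum>z\<in>F. w y z * (g z::real))))"
  unfolding right_diff_distrib sum_subtractf sum_distrib_left
  by (simp only: mult_ac)
lemma t3: "(\<Sum>z\<in>N. w z * (\<Sum>i\<in>E. c i * F i z)) = (\<Sum>i\<in>E. c i * (\<Sum>z\<in>N. w z * (F i z::real)))"
    apply (simp only: sum_distrib_left)
    apply (subst sum.swap)
    by (simp add: mult_ac)
lemma t4: assumes "S = (\<Sum>i\<in>E. c i * (T i::real))"
  shows "(\<Sum>i\<in>E. c i * F i) - S / d = (\<Sum>i\<in>E. c i * (F i - T i / d))"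
  unfolding assms by (simp add: sum_subtractf right_diff_distrib sum_divide_distrib mult_ac)

lemma lemC:
  assumes wg: "weighted_graph w" and lf: "locally_finite w" and F: "finite F"
    and g: "\<And>y. g y \<noteq> 0 \<Longrightarrow> y \<in> F \<and> neighbours w y \<subseteq> F"
  shows "(\<Sum>y\<in>F. mu w y * laplacian w f y * g y) = (\<Sum>y\<in>F. f y * (mu w y * laplacian w g y))"
proof -
  have sym: "\<And>a b. w a b = w b a" using wg unfolding weighted_graph_def by blast
  have s1: "(\<Sum>y\<in>F. mu w y * laplacian w f y * g y) = (\<Sum>y\<in>F. (mu w y * f y - (\<Sum>z\<in>F. w y z * f z)) * g y)"
  proof (rule sum.cong[OF refl])
    fix y assume "y \<in> F"
    show "mu w y * laplacian w f y * g y = (mu w y * f y - (\<Sum>z\<in>F. w y z * f z)) * g y"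
    proof (cases "g y = 0")
      case False
      then have "(\<Sum>z\<in>neighbours w y. w y z * f z) = (\<Sum>z\<in>F. w y z * f z)"
        using g[OF False] by (intro lemB[OF wg lf F]) auto
      then show ?thesis by (simp only: lemA[OF lf])
    qed simp
  qed
  have s3: "(\<Sum>y\<in>F. \<Sum>z\<in>F. w y z * f z * g y) = (\<Sum>y\<in>F. \<Sum>z\<in>F. w y z * g z * f y)"
  proof -
    have e: "w b a * f a * g b = w a b * g b * f a" for a b
      by (subst sym[of b a]) (simp only: mult_ac)
    show ?thesis
      apply (subst sum.swap)
      by (simp only: e)
  qed
  have s5: "(\<Sum>y\<in>F. f y * (mu w y * g y - (\<Sum>z\<in>F. w y z * g z))) = (\<Sum>y\<in>F. f y * (mu w y * laplacian w g y))"
  proof (rule sum.cong[OF refl])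
    fix y assume "y \<in> F"
    have "(\<Sum>z\<in>neighbours w y. w y z * g z) = (\<Sum>z\<in>F. w y z * g z)"
      using g by (intro lemB[OF wg lf F]) auto
    then show "f y * (mu w y * g y - (\<Sum>z\<in>F. w y z * g z)) = f y * (mu w y * laplacian w g y)"
      by (simp only: lemA[OF lf])
  qed
  note s1
  also have "(\<Sum>y\<in>F. (mu w y * f y - (\<Sum>z\<in>F. w y z * f z)) * g y) = (\<Sum>y\<in>F. mu w y * f y * g y) - (\<Sum>y\<in>F. \<Sum>z\<in>F. w y z * f z * g y)"
    by (rule t1)
  also have "\<dots> = (\<Sum>y\<in>F. mu w y * f y * g y) - (\<Sum>y\<in>F. \<Sum>z\<in>F. w y z * g z * f y)"
    by (simp only: s3)
  also have "\<dots> = (\<Sum>y\<in>F. f y * (mu w y * g y - (\<Sum>z\<in>F. w y z * g z)))"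
    by (rule t2)
  also note s5
  finally show ?thesis .
qed

lemma lemL:
  assumes "finite E"
  shows "laplacian w (\<lambda>z. \<Sum>i\<in>E. c i * F i z) y = (\<Sum>i\<in>E. c i * laplacian w (F i) y)"
  unfolding laplacian_def
  by (rule t4[OF t3])


definition dl :: "'a \<Rightarrow> 'a \<Rightarrow> real" where
  "dl x = (\<lambda>z. if z = x then 1 else 0)"

lemma sum_dl: "finite F \<Longrightarrow> x \<in> F \<Longrightarrow> (\<Sum>y\<in>F. c y * dl x y) = c x"
proof -
  assume F: "finite F" "x \<in> F"
  have "(\<Sum>y\<in>F. c y * dl x y) = (\<Sum>y\<in>F. if y = x then c y else 0)"
    by (rule sum.cong) (auto simp: dl_def)
  also have "\<dots> = c x" using F by (simp add: sum.delta')
  finally show ?thesis .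
qed

lemma sum_dl2: "finite F \<Longrightarrow> (\<Sum>y\<in>F. c y * dl y z) = (if z \<in> F then c z else 0)"
proof -
  assume F: "finite F"
  have "(\<Sum>y\<in>F. c y * dl y z) = (\<Sum>y\<in>F. if y = z then c y else 0)"
    by (rule sum.cong) (auto simp: dl_def)
  also have "\<dots> = (if z \<in> F then c z else 0)" using F by (simp add: sum.delta')
  finally show ?thesis .
qed

theorem lemma5p2:
  fixes w :: "'a \<Rightarrow> 'a \<Rightarrow> real" and X :: "'a set"
  assumes "weighted_graph w" and "locally_finite w" and "finite X"
  shows "(laplacian w ` supported_on (UNIV - X) = UNIV) \<longleftrightarrow>
         \<not> (\<exists>f. f \<noteq> (\<lambda>_. 0) \<and> finitely_supported f \<and> harmonic_on w f (UNIV - X))"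
proof
  note wg = assms(1) and lf = assms(2)
  have finN: "finite (neighbours w y)" for y using lf by (simp add: locally_finite_def)
  assume surj: "laplacian w ` supported_on (UNIV - X) = UNIV"
  show "\<not> (\<exists>f. f \<noteq> (\<lambda>_. 0) \<and> finitely_supported f \<and> harmonic_on w f (UNIV - X))"
  proof
    assume "\<exists>f. f \<noteq> (\<lambda>_. 0) \<and> finitely_supported f \<and> harmonic_on w f (UNIV - X)"
    then obtain g where g0: "g \<noteq> (\<lambda>_. 0)" and fs: "finitely_supported g"
      and hg: "harmonic_on w g (UNIV - X)" by blast
    obtain x where gx: "g x \<noteq> 0" using g0 by (auto simp: fun_eq_iff)
    have "dl x \<in> laplacian w ` supported_on (UNIV - X)" by (subst surj) (rule UNIV_I)
    then obtain f where lfx0: "dl x = laplacian w f" and fS: "f \<in> supported_on (UNIV - X)" by (rule imageE)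
    have lfx: "laplacian w f = dl x" by (rule lfx0[symmetric])
    define S where "S = {y. g y \<noteq> 0}"
    define F where "F = S \<union> \<Union>(neighbours w ` S)"
    have finS: "finite S" using fs by (simp add: S_def finitely_supported_def)
    have finF: "finite F" unfolding F_def using finS finN by blast
    have xF: "x \<in> F" using gx by (simp add: F_def S_def)
    have C: "(\<Sum>y\<in>F. mu w y * laplacian w f y * g y) = (\<Sum>y\<in>F. f y * (mu w y * laplacian w g y))"
      by (rule lemC[OF wg lf finF]) (auto simp: F_def S_def)
    have "(\<Sum>y\<in>F. mu w y * laplacian w f y * g y) = (\<Sum>y\<in>F. (mu w y * g y) * dl x y)"
      unfolding lfx by (simp only: mult_ac)
    also have "\<dots> = mu w x * g x" by (rule sum_dl[OF finF xF])
    finally have L: "(\<Sum>y\<in>F. mu w y * laplacian w f y * g y) = mu w x * g x" .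
    have "(\<Sum>y\<in>F. f y * (mu w y * laplacian w g y)) = 0"
    proof (rule sum.neutral, rule ballI)
      fix y assume "y \<in> F"
      show "f y * (mu w y * laplacian w g y) = 0"
      proof (cases "y \<in> X")
        case True then have "f y = 0" using fS by (simp add: supported_on_def)
        then show ?thesis by simp
      next
        case False then have "laplacian w g y = 0" using hg by (simp add: harmonic_on_def)
        then show ?thesis by simp
      qed
    qed
    with C L have "mu w x * g x = 0" by simp
    with gx mu_pos[of w x] show False by simp
  qed
next
  note wg = assms(1) and lf = assms(2)
  have finN: "finite (neighbours w y)" for y using lf by (simp add: locally_finite_def)
  have sym: "\<And>a b. w a b = w b a" using wg unfolding weighted_graph_def by blast
  assume nh: "\<not> (\<exists>f. f \<noteq> (\<lambda>_. 0) \<and> finitely_supported f \<and> harmonic_on w f (UNIV - X))"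
  define t where "t i = (\<lambda>y. if y \<in> X then 0 else mu w y * laplacian w (dl i) y)" for i
  have K: "\<forall>i\<in>E. c i = 0" if E: "finite E" and c: "\<And>y. y \<notin> X \<Longrightarrow> (\<Sum>i\<in>E. c i * t i y) = 0" for E c
  proof -
    define g where "g = (\<lambda>z. \<Sum>i\<in>E. c i * dl i z)"
    have gz: "g z = (if z \<in> E then c z else 0)" for z unfolding g_def by (rule sum_dl2[OF E])
    have "finitely_supported g" unfolding finitely_supported_def
      by (rule finite_subset[OF _ E]) (auto simp: gz split: if_splits)
    moreover have "harmonic_on w g (UNIV - X)" unfolding harmonic_on_def
    proof
      fix y assume "y \<in> UNIV - X"
      then have yX: "y \<notin> X" by simp
      have "mu w y * laplacian w g y = mu w y * (\<Sum>i\<in>E. c i * laplacian w (dl i) y)"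
        unfolding g_def by (simp only: lemL[OF E])
      also have "\<dots> = (\<Sum>i\<in>E. c i * t i y)"
        by (simp add: t_def yX sum_distrib_left mult_ac)
      also have "\<dots> = 0" by (rule c[OF yX])
      finally show "laplacian w g y = 0" using mu_pos[of w y] by simp
    qed
    ultimately have "g = (\<lambda>_. 0)" using nh by blast
    then show ?thesis using gz by (metis)
  qed
  have injt: "inj t"
  proof (rule injI, rule ccontr)
    fix a b assume tab: "t a = t b" and ab: "a \<noteq> b"
    define c :: "'a \<Rightarrow> real" where "c i = (if i = a then 1 else -1)" for i
    have "\<forall>i\<in>{a,b}. c i = 0"
    proof (rule K)
      fix y show "(\<Sum>i\<in>{a, b}. c i * t i y) = 0" using ab tab by (simp add: c_def)
    qed simp
    then show False by (simp add: c_def)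
  qed
  show "laplacian w ` supported_on (UNIV - X) = UNIV"
  proof (rule set_eqI, rule iffI)
    fix h :: "'a \<Rightarrow> real"
    have "\<exists>\<phi>. Vector_Spaces.linear sc ((*)::real\<Rightarrow>real\<Rightarrow>real) \<phi> \<and>
        (\<forall>b\<in>range t. \<phi> b = (\<lambda>b. mu w (inv t b) * h (inv t b)) b)"
    proof (rule extend)
      fix S u assume S: "finite S" "S \<subseteq> range t" and su: "(\<Sum>v\<in>S. sc (u v) v) = 0"
      define E where "E = t -` S"
      have finE: "finite E" unfolding E_def using S(1) injt by (simp add: finite_vimageI)
      have SE: "S = t ` E" unfolding E_def using S(2) by blast
      have "(\<Sum>v\<in>S. sc (u v) v) = (\<Sum>i\<in>E. sc (u (t i)) (t i))"
        unfolding SE by (rule sum.reindex_cong[OF inj_on_subset[OF injt subset_UNIV]]) auto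
      with su have su2: "(\<Sum>i\<in>E. sc (u (t i)) (t i)) = 0" by simp
      have "\<forall>i\<in>E. u (t i) = 0"
      proof (rule K[OF finE])
        fix y
        have "(\<Sum>i\<in>E. u (t i) * t i y) = (\<Sum>i\<in>E. sc (u (t i)) (t i)) y"
          by (simp add: sum_fun_app sc_def)
        then show "(\<Sum>i\<in>E. u (t i) * t i y) = 0" using su2 by simp
      qed
      then show "\<forall>v\<in>S. u v = 0" unfolding SE by blast
    qed
    then obtain \<phi> where lin: "Vector_Spaces.linear sc ((*)::real\<Rightarrow>real\<Rightarrow>real) \<phi>"
      and \<phi>t: "\<And>b. b \<in> range t \<Longrightarrow> \<phi> b = mu w (inv t b) * h (inv t b)" by blast
    have \<phi>tx: "\<phi> (t x) = mu w x * h x" for x using \<phi>t[of "t x"] injt by simp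
    define f where "f y = (if y \<in> X then 0 else \<phi> (dl y))" for y
    have fS: "f \<in> supported_on (UNIV - X)" by (simp add: supported_on_def f_def)
    have "laplacian w f x = h x" for x
    proof -
      define F where "F = insert x (neighbours w x)"
      have finF: "finite F" using finN by (simp add: F_def)
      have xF: "x \<in> F" by (simp add: F_def)
      have t0: "t x z = 0" if "z \<notin> F" for z
      proof (cases "z \<in> X")
        case False
        have zx: "z \<noteq> x" using that by (auto simp: F_def)
        have xn: "x \<notin> neighbours w z" using that sym[of z x] by (auto simp: F_def neighbours_def)
        have "(\<Sum>v\<in>neighbours w z. w z v * dl x v) = (\<Sum>v\<in>neighbours w z. if v = x then w z v else 0)"
          by (rule sum.cong) (auto simp: dl_def)
        also have "\<dots> = 0" using xn finN[of z] by (simp add: sum.delta')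
        finally have "mu w z * laplacian w (dl x) z = 0"
          using zx by (simp add: lemA[OF lf] dl_def)
        then show ?thesis using False by (simp add: t_def)
      qed (simp add: t_def)
      have tsum: "t x = (\<Sum>y\<in>F. sc (t x y) (dl y))"
      proof
        fix z
        have "(\<Sum>y\<in>F. sc (t x y) (dl y)) z = (\<Sum>y\<in>F. t x y * dl y z)"
          by (simp add: sum_fun_app sc_def)
        also have "\<dots> = t x z" using t0 by (simp add: sum_dl2[OF finF])
        finally show "t x z = (\<Sum>y\<in>F. sc (t x y) (dl y)) z" by simp
      qed
      have "mu w x * h x = \<phi> (t x)" by (simp add: \<phi>tx)
      also have "\<dots> = (\<Sum>y\<in>F. t x y * \<phi> (dl y))"
        by (subst tsum) (rule lin_sum[OF lin])
      also have "\<dots> = (\<Sum>y\<in>F. f y * (mu w y * laplacian w (dl x) y))"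
        by (rule sum.cong) (auto simp: t_def f_def)
      also have "\<dots> = (\<Sum>y\<in>F. mu w y * laplacian w f y * dl x y)"
        by (rule lemC[OF wg lf finF, symmetric]) (auto simp: dl_def F_def split: if_splits)
      also have "\<dots> = mu w x * laplacian w f x" by (rule sum_dl[OF finF xF])
      finally show ?thesis using mu_pos[of w x] by simp
    qed
    then have "h = laplacian w f" by (simp add: fun_eq_iff)
    then show "h \<in> laplacian w ` supported_on (UNIV - X)" using fS by blast
  qed simp
qed

end
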